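(* Let $\mathrm{k}$ be an infinite field. For every integer $n\geq4$ and every non-constant polynomial $P\in\mathrm{k}[T]$, the $\mathrm{k}$-algebra $\mathrm{k}[T]/(P^n)$ has infinitely many subalgebras.
   Context: Subalgebras are unital (contain $1$). *)

theory Defs
  imports "HOL-Computational_Algebra.Polynomial"
begin

text \<open>The quotient algebra k[T]/(Q) is modelled by canonical representatives:
  polynomials r with r mod Q = r, with addition and scalar multiplication
  inherited from k[T] and multiplication x * y mod Q.\<close>

definition residues_mod :: "'a::field poly \<Rightarrow> 'a poly set" where
  "residues_mod Q = {r. r mod Q = r}"

definition quot_subalgebra :: "'a::field poly \<Rightarrow> 'a poly set \<Rightarrow> bool" where
  "quot_subalgebra Q S \<longleftrightarrow>
     S \<subseteq> residues_mod Q \<and>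
     1 mod Q \<in> S \<and>
     (\<forall>x\<in>S. \<forall>y\<in>S. x + y \<in> S) \<and>
     (\<forall>c. \<forall>x\<in>S. smult c x \<in> S) \<and>
     (\<forall>x\<in>S. \<forall>y\<in>S. (x * y) mod Q \<in> S)"

end

theory Submission
  imports Defs
begin

definition vv :: "'a::field poly \<Rightarrow> nat \<Rightarrow> 'a \<Rightarrow> 'a poly" where
  "vv P m c = P ^ m * (1 + smult c P)"

definition SS :: "'a::field poly \<Rightarrow> nat \<Rightarrow> 'a \<Rightarrow> 'a poly set" where
  "SS P m c = {[:a:] + smult b (vv P m c) | a b. True}"

lemma deg_vv:
  assumes "degree P > 0"
  shows "degree (vv P m c) < degree (P ^ (m+2))"
proof -
  have "degree (1 + smult c P) \<le> degree P"
    by (rule degree_add_le) (auto intro: degree_smult_le)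
  hence "degree (vv P m c) \<le> m * degree P + degree P"
  proof -
    assume h: "degree (1 + smult c P) \<le> degree P"
    have "degree (vv P m c) \<le> degree (P^m) + degree (1 + smult c P)"
      unfolding vv_def by (rule degree_mult_le)
    also have "\<dots> \<le> m * degree P + degree P"
      using degree_power_le[of P m] h by (simp add: mult.commute add_mono)
    finally show ?thesis .
  qed
  moreover have "degree (P ^ (m+2)) = (m+2) * degree P" using assms by (subst degree_power_eq) auto
  ultimately show ?thesis using assms by simp
qed

lemma deg_elem:
  assumes "degree P > 0"
  shows "degree ([:a:] + smult b (vv P m c)) < degree (P ^ (m+2))"
proof -
  have "degree ([:a:] + smult b (vv P m c)) \<le> degree (vv P m c)"
    by (rule degree_add_le) (auto intro: degree_smult_le)
  thus ?thesis using deg_vv[OF assms, of m c] by (rule le_less_trans)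
qed

lemma sub:
  assumes "degree P > 0" and "m \<ge> 2"
  shows "quot_subalgebra (P ^ (m+2)) (SS P m c)"
  unfolding quot_subalgebra_def
proof (intro conjI ballI allI)
  let ?Q = "P ^ (m+2)"
  have "P \<noteq> 0" using assms by auto
  hence dQ: "degree ?Q > 0" using assms by (subst degree_power_eq) auto
  show "SS P m c \<subseteq> residues_mod ?Q"
  proof
    fix x assume "x \<in> SS P m c"
    then obtain a b where x: "x = [:a:] + smult b (vv P m c)" unfolding SS_def by blast
    show "x \<in> residues_mod ?Q" unfolding residues_mod_def x
      by (rule CollectI, rule mod_poly_less[OF deg_elem[OF assms(1)]])
  qed
  have "1 mod ?Q = 1" using dQ by (simp add: mod_poly_less)
  moreover have "(1::'a poly) = [:1:] + smult 0 (vv P m c)" by (simp add: one_pCons)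
  ultimately show "1 mod ?Q \<in> SS P m c" unfolding SS_def
    by (intro CollectI exI[of _ 1] exI[of _ 0]) simp
next
  fix x y assume "x \<in> SS P m c" "y \<in> SS P m c"
  then obtain a b a' b' where x: "x = [:a:] + smult b (vv P m c)"
    and y: "y = [:a':] + smult b' (vv P m c)" unfolding SS_def by auto
  have "x + y = [:a+a':] + smult (b+b') (vv P m c)" unfolding x y
    by (simp add: algebra_simps smult_add_left)
  thus "x + y \<in> SS P m c" unfolding SS_def by auto
next
  fix c' x assume "x \<in> SS P m c"
  then obtain a b where x: "x = [:a:] + smult b (vv P m c)" unfolding SS_def by auto
  have "smult c' x = [:c'*a:] + smult (c'*b) (vv P m c)" unfolding x
    by (simp add: algebra_simps smult_add_right)
  thus "smult c' x \<in> SS P m c" unfolding SS_def by auto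
next
  let ?Q = "P ^ (m+2)"
  fix x y assume "x \<in> SS P m c" "y \<in> SS P m c"
  then obtain a b a' b' where x: "x = [:a:] + smult b (vv P m c)"
    and y: "y = [:a':] + smult b' (vv P m c)" unfolding SS_def by auto
  define u where "u = [:a*a':] + smult (a*b'+a'*b) (vv P m c)"
  have "?Q dvd P ^ (m + m)" using assms(2) by (intro le_imp_power_dvd) simp
  moreover have "vv P m c * vv P m c = P ^ (m + m) * ((1 + smult c P) * (1 + smult c P))"
    unfolding vv_def power_add by (simp only: ac_simps)
  ultimately have "?Q dvd vv P m c * vv P m c" by (simp add: dvd_mult2)
  then obtain w where w: "vv P m c * vv P m c = ?Q * w" by auto
  have "x * y = u + smult (b*b') (vv P m c * vv P m c)" unfolding x y u_def
    by (simp add: algebra_simps smult_add_left smult_add_right)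
  also have "\<dots> = u + smult (b*b') w * ?Q" unfolding w
    by (simp only: mult_smult_right mult_smult_left mult.commute)
  finally have "(x*y) mod ?Q = u mod ?Q" by (simp only: mod_mult_self1)
  also have "\<dots> = u" unfolding u_def using deg_elem[OF assms(1)] by (simp add: mod_poly_less)
  finally show "(x*y) mod ?Q \<in> SS P m c" unfolding SS_def u_def by auto
qed

lemma inj:
  assumes "degree P > 0" and "m \<ge> 2"
  shows "inj (SS P m)"
proof (rule injI)
  fix c d assume eq: "SS P m c = SS P m d"
  have "vv P m c \<in> SS P m c" unfolding SS_def
    by (rule CollectI, rule exI[of _ 0], rule exI[of _ 1]) simp
  hence "vv P m c \<in> SS P m d" using eq by simp
  then obtain a b where e: "vv P m c = [:a:] + smult b (vv P m d)" unfolding SS_def by blast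
  have P0: "P \<noteq> 0" using assms by auto
  have aeq: "[:a:] = P ^ m * ([:1-b:] + smult (c - b*d) P)"
    using e unfolding vv_def by (simp add: algebra_simps smult_add_right smult_diff_left one_pCons)
  have "P dvd [:a:]" using aeq assms(2)
  proof -
    have "P dvd P ^ m" using assms(2) by (intro dvd_power) auto
    hence "P dvd P ^ m * ([:1 - b:] + smult (c - b * d) P)" by (rule dvd_mult2)
    thus ?thesis using aeq by simp
  qed
  hence "a = 0"
  proof (rule contrapos_pp)
    assume "a \<noteq> 0"
    hence "[:a:] \<noteq> 0" by simp
    thus "\<not> P dvd [:a:]" using assms(1) dvd_imp_degree_le[of P "[:a:]"] by auto
  qed
  hence "[:1-b:] + smult (c - b*d) P = 0" using aeq P0 by simp
  hence h: "[:1-b:] = - smult (c - b*d) P" by (simp add: eq_neg_iff_add_eq_0)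
  have "c - b*d = 0"
  proof (rule ccontr)
    assume "c - b*d \<noteq> 0"
    hence "degree (- smult (c - b*d) P) > 0" using assms by simp
    thus False using h by (metis degree_pCons_0 less_irrefl)
  qed
  moreover hence "b = 1" using h by simp
  ultimately show "c = d" by simp
qed

theorem lemma3p5:
  fixes P :: "'a::field poly" and n :: nat
  assumes "infinite (UNIV :: 'a set)"
    and "n \<ge> 4"
    and "degree P > 0"
  shows "infinite {S. quot_subalgebra (P ^ n) S}"
proof -
  define m where "m = n - 2"
  have n: "n = m + 2" and m: "m \<ge> 2" using assms(2) unfolding m_def by auto
  have "range (SS P m) \<subseteq> {S. quot_subalgebra (P ^ n) S}"
    using sub[OF assms(3) m] n by auto
  moreover have "infinite (range (SS P m))"
    using inj[OF assms(3) m] assms(1) finite_imageD by blast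
  ultimately show ?thesis using finite_subset by blast
qed

end
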